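(* Let $\mathcal{H}_S$ (system) and $\mathcal{H}_B$ (bath) be finite-dimensional Hilbert spaces, and fix a final time $T>0$. Let $t\mapsto \overline{H}_S(t)$ be a continuous family of Hermitian operators on $\mathcal{H}_S$, $H_B$ a Hermitian operator on $\mathcal{H}_B$, and $H_0(t)=\overline{H}_S(t)\otimes I+I\otimes H_B$. Let $H_{\mathrm{p}}$ be a time-independent Hermitian operator on $\mathcal{H}_S$ with spectral decomposition $H_{\mathrm{p}}=\sum_a\lambda_a\Pi_a$ (distinct eigenvalues $\lambda_a$, spectral projectors $\Pi_a$), let $E_{\mathrm{p}}>0$, and let $V$ be a time-independent Hermitian operator on $\mathcal{H}_S\otimes\mathcal{H}_B$. Let $\mathcal{I}$ be a set of indices of eigenvalues of $H_{\mathrm{p}}$, and set $$P=\sum_{a\in\mathcal{I}}\Pi_a,\qquad W=\sum_{a\in\mathcal{I}}\Pi_a V\Pi_a.$$ Assume that $[\overline{H}_S(t),P]=[\overline{H}_S(t),H_{\mathrm{p}}]=0$ for all $t\in[0,T]$. Let $U_V(T)$ and $U_W(T)$ be the unitary evolutions at time $T$ (solutions of $i\,\frac{d}{dt}U=H(t)U$, $U(0)=I$) generated by $H_V(t)=H_0(t)+E_{\mathrm{p}}H_{\mathrm{p}}+V$ and $H_W(t)=H_0(t)+E_{\mathrm{p}}H_{\mathrm{p}}+W$ respectively, i.e. $U_W(T)=\mathcal{T}\exp\left(-i\int_0^T(H_0(t)+E_{\mathrm{p}}H_{\mathrm{p}}+W)\,dt\right)$. Then for any unitarily invariant norm $\|\cdot\|$,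 $$\lim_{E_{\mathrm{p}}\to\infty}\big\|U_V(T)P-U_W(T)P\big\|=0.$$
   Context: All operators on $\mathcal{H}_S$ or $\mathcal{H}_B$ are regarded as operators on $\mathcal{H}_S\otimes\mathcal{H}_B$ by tensoring with the identity. $\mathcal{T}$ denotes time ordering. A norm is unitarily invariant if $\|UXV\|=\|X\|$ for all unitaries $U,V$. *)

theory Defs
  imports "HOL-Analysis.Analysis"
begin

text \<open>Finite-dimensional Hilbert spaces are modelled as complex^'n for a finite
index type 'n; operators are square matrices complex^'n^'n.  The tensor product
H_S (x) H_B is complex^('s \<times> 'b).\<close>

type_synonym 'n cmat = "complex^'n^'n"

definition cadj :: "'n::finite cmat \<Rightarrow> 'n cmat" where
  "cadj A = (\<chi> i j. cnj (A $ j $ i))"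

definition hermitian :: "'n::finite cmat \<Rightarrow> bool" where
  "hermitian A \<longleftrightarrow> cadj A = A"

definition unitary :: "'n::finite cmat \<Rightarrow> bool" where
  "unitary U \<longleftrightarrow> U ** cadj U = mat 1 \<and> cadj U ** U = mat 1"

definition kron :: "'s::finite cmat \<Rightarrow> 'b::finite cmat \<Rightarrow> ('s \<times> 'b) cmat" where
  "kron A B = (\<chi> p q. A $ fst p $ fst q * B $ snd p $ snd q)"

definition liftS :: "'s::finite cmat \<Rightarrow> ('s \<times> 'b::finite) cmat" where
  "liftS A = kron A (mat 1)"

definition liftB :: "'b::finite cmat \<Rightarrow> ('s::finite \<times> 'b) cmat" where
  "liftB B = kron (mat 1) B"

definition commute :: "'n::finite cmat \<Rightarrow> 'n cmat \<Rightarrow> bool" where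
  "commute A B \<longleftrightarrow> A ** B = B ** A"

text \<open>A (complex) matrix norm that is unitarily invariant.  Scalar multiplication
by c is written as left multiplication by the diagonal matrix mat c.\<close>
definition unitarily_invariant_norm :: "('n::finite cmat \<Rightarrow> real) \<Rightarrow> bool" where
  "unitarily_invariant_norm N \<longleftrightarrow>
     (\<forall>X. N X = 0 \<longleftrightarrow> X = 0) \<and>
     (\<forall>X Y. N (X + Y) \<le> N X + N Y) \<and>
     (\<forall>c X. N (mat c ** X) = cmod c * N X) \<and>
     (\<forall>U X V. unitary U \<longrightarrow> unitary V \<longrightarrow> N (U ** X ** V) = N X)"

definition evolution :: "real \<Rightarrow> (real \<Rightarrow> 'n::finite cmat) \<Rightarrow> (real \<Rightarrow> 'n cmat) \<Rightarrow> bool" where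
  "evolution T H U \<longleftrightarrow> U 0 = mat 1 \<and>
     (\<forall>t\<in>{0..T}. (U has_vector_derivative (mat (- \<i>) ** (H t ** U t))) (at t within {0..T}))"

end

theory Submission
  imports Defs
begin


context fixes A B C :: "'n::finite cmat" begin
lemma matrix_add_rdistrib': "((B + C) ** A) = (B ** A) + (C ** A)"
  by (vector matrix_matrix_mult_def sum.distrib[symmetric] field_simps)
lemma matrix_diff_ldistrib: "(A ** (B - C)) = (A ** B) - (A ** C)"
  by (vector matrix_matrix_mult_def sum_subtractf[symmetric] field_simps)
lemma matrix_diff_rdistrib: "((B - C) ** A) = (B ** A) - (C ** A)"
  by (vector matrix_matrix_mult_def sum_subtractf[symmetric] field_simps)
lemma mat_left: "(mat c ** A) = (\<chi> i j. c * A$i$j)"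
  by (simp add: matrix_matrix_mult_def mat_def vec_eq_iff if_distrib if_distribR cong: if_cong)
lemma mat_right: "(A ** mat c) = (\<chi> i j. A$i$j * c)"
  by (simp add: matrix_matrix_mult_def mat_def vec_eq_iff if_distrib if_distribR cong: if_cong)
end

lemma matrix_sum_ldistrib: fixes A :: "'n::finite cmat" and f :: "'b \<Rightarrow> 'n cmat" shows "A ** (\<Sum>x\<in>S. f x) = (\<Sum>x\<in>S. A ** f x)"
proof (induction S rule: infinite_finite_induct)
  case (insert x F)
  then show ?case using matrix_add_ldistrib[of A "f x" "sum f F"] by simp
qed auto
lemma matrix_sum_rdistrib: fixes A :: "'n::finite cmat" and f :: "'b \<Rightarrow> 'n cmat" shows "(\<Sum>x\<in>S. f x) ** A = (\<Sum>x\<in>S. f x ** A)"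
proof (induction S rule: infinite_finite_induct)
  case (insert x F)
  then show ?case using matrix_add_rdistrib'[of "f x" "sum f F" A] by simp
qed auto

context fixes A B :: "'n::finite cmat" begin
lemma mat_comm: "A ** mat c = mat c ** A"
  by (simp add: mat_left mat_right mult.commute)
lemma mat_mat: "mat a ** mat b = (mat (a*b) :: 'n cmat)"
  by (subst mat_left) (simp add: vec_eq_iff mat_def)
lemma mat_add: "mat (a+b) = (mat a + mat b :: 'n cmat)"
  by (simp add: vec_eq_iff mat_def)
lemma scaleR_mat: "r *\<^sub>R A = mat (of_real r) ** A"
  by (simp add: mat_left vec_eq_iff scaleR_conv_of_real[where 'a=complex])
lemma mat_uminus: "mat (-c) ** A = - (mat c ** A)"
  by (simp add: mat_left vec_eq_iff)
lemma mat_assoc_right: "A ** (mat c ** B) = mat c ** (A ** B)"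
  by (metis mat_comm matrix_mul_assoc)
lemma cadj_mult: "cadj (A ** B) = cadj B ** cadj A"
  by (simp add: cadj_def matrix_matrix_mult_def vec_eq_iff mult.commute)
lemma cadj_add: "cadj (A + B) = cadj A + cadj B"
  by (simp add: cadj_def vec_eq_iff)
lemma cadj_diff: "cadj (A - B) = cadj A - cadj B"
  by (simp add: cadj_def vec_eq_iff)
lemma cadj_uminus: "cadj (- B) = - cadj B"
  by (simp add: cadj_def vec_eq_iff)
lemma cadj_zero: "cadj (0::'n cmat) = 0"
  by (simp add: cadj_def vec_eq_iff)
lemma cadj_mat: "cadj (mat c :: 'n cmat) = mat (cnj c)"
  by (simp add: cadj_def vec_eq_iff mat_def)
lemma cadj_cadj: "cadj (cadj A) = A"
  by (simp add: cadj_def vec_eq_iff)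
lemma cadj_scaleR: "cadj (r *\<^sub>R A) = r *\<^sub>R cadj A"
  by (simp add: cadj_def vec_eq_iff scaleR_conv_of_real[where 'a=complex])
end

lemma cadj_sum: "cadj (\<Sum>x\<in>S. f x) = (\<Sum>x\<in>S. cadj (f x) :: 'n::finite cmat)"
  by (induction S rule: infinite_finite_induct) (auto simp: cadj_add cadj_zero)

lemma linear_cadj: "linear (cadj :: 'n::finite cmat \<Rightarrow> _)"
  by (rule linearI) (auto simp: cadj_add cadj_scaleR)
lemma bl_cadj: "bounded_linear (cadj :: 'n::finite cmat \<Rightarrow> _)"
  using linear_cadj linear_conv_bounded_linear by blast

lemma bilinear_mm: "bilinear ((**) :: 'n::finite cmat \<Rightarrow> 'n cmat \<Rightarrow> 'n cmat)"
  unfolding bilinear_def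
  by (auto intro!: linearI simp: matrix_add_ldistrib matrix_add_rdistrib' scalar_matrix_assoc matrix_scalar_ac)
lemma bb_mm: "bounded_bilinear ((**) :: 'n::finite cmat \<Rightarrow> 'n cmat \<Rightarrow> 'n cmat)"
  using bilinear_mm bilinear_conv_bounded_bilinear by blast

context fixes A B :: "'n::finite cmat" begin
lemma matrix_neg_left: "(- A) ** B = - (A ** B)"
  by (metis add_left_imp_eq matrix_add_rdistrib' neg_eq_iff_add_eq_0 times0_left)
lemma matrix_neg_right: "A ** (- B) = - (A ** B)"
  by (metis add_left_imp_eq matrix_add_ldistrib neg_eq_iff_add_eq_0 times0_right)
end

lemmas msimps = cadj_mult cadj_mat matrix_diff_ldistrib matrix_diff_rdistrib matrix_add_ldistrib
  matrix_add_rdistrib' mat_assoc_right mat_uminus matrix_mul_assoc matrix_neg_left matrix_neg_right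
  cadj_add cadj_diff cadj_uminus cadj_cadj mat_mat

lemma sandwich_deriv:
  fixes U1 U2 H1 H2 :: "real \<Rightarrow> 'n::finite cmat"
  assumes d1: "(U1 has_vector_derivative mat (-\<i>) ** (H1 t ** U1 t)) (at t within S)"
    and d2: "(U2 has_vector_derivative mat (-\<i>) ** (H2 t ** U2 t)) (at t within S)"
    and h: "hermitian (H1 t)"
  shows "((\<lambda>s. cadj (U1 s) ** C ** U2 s) has_vector_derivative
           mat \<i> ** (cadj (U1 t) ** (H1 t ** C - C ** H2 t) ** U2 t)) (at t within S)"
proof -
  have a: "((\<lambda>s. cadj (U1 s)) has_vector_derivative cadj (mat (-\<i>) ** (H1 t ** U1 t))) (at t within S)"
    by (rule bounded_linear.has_vector_derivative[OF bl_cadj d1])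
  have b: "((\<lambda>s. cadj (U1 s) ** C) has_vector_derivative cadj (mat (-\<i>) ** (H1 t ** U1 t)) ** C) (at t within S)"
    using bounded_bilinear.has_vector_derivative[OF bb_mm a has_vector_derivative_const] by simp
  show ?thesis
    using bounded_bilinear.has_vector_derivative[OF bb_mm b d2]
    apply (rule has_vector_derivative_eq_rhs)
    using h unfolding hermitian_def
    by (simp add: msimps mat_comm)
qed




lemma norm_vec_le_sum: "norm (x :: 'a::real_normed_vector^'n::finite) \<le> (\<Sum>i\<in>UNIV. norm (x$i))"
  unfolding norm_vec_def by (rule L2_set_le_sum) auto

lemma norm_cmat_le: "norm (X::'n::finite cmat) \<le> (\<Sum>i\<in>UNIV. \<Sum>j\<in>UNIV. cmod (X$i$j))"
  by (rule order_trans[OF norm_vec_le_sum]) (intro sum_mono norm_vec_le_sum)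

lemma norm_cmat_entries_le1:
  assumes "\<And>i j. cmod ((X::'n::finite cmat)$i$j) \<le> 1"
  shows "norm X \<le> real (CARD('n))^2"
proof -
  have "norm X \<le> (\<Sum>i\<in>(UNIV::'n set). \<Sum>j\<in>(UNIV::'n set). 1)"
    by (rule order_trans[OF norm_cmat_le]) (intro sum_mono assms)
  then show ?thesis by (simp add: power2_eq_square)
qed

lemma cadj_mult_self_entry:
  "(cadj (Y::'n::finite cmat) ** Y) $ j $ j = of_real (\<Sum>k\<in>UNIV. (cmod (Y$k$j))^2)"
proof -
  have "(cadj Y ** Y) $ j $ j = (\<Sum>k\<in>UNIV. Y$k$j * cnj (Y$k$j))"
    by (simp add: cadj_def matrix_matrix_mult_def mult.commute)
  also have "\<dots> = (\<Sum>k\<in>UNIV. of_real ((cmod (Y$k$j))^2))"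
    by (simp only: complex_norm_square)
  also have "\<dots> = of_real (\<Sum>k\<in>UNIV. (cmod (Y$k$j))^2)"
    by (simp only: of_real_sum)
  finally show ?thesis .
qed

lemma cadj_mult_self_entry_real:
  "(\<Sum>k\<in>UNIV. (cmod ((Y::'n::finite cmat)$k$j))^2) = Re ((cadj Y ** Y) $ j $ j)"
  by (simp only: cadj_mult_self_entry Re_complex_of_real)

lemma cadj_self_zero: assumes "cadj (Y::'n::finite cmat) ** Y = 0" shows "Y = 0"
proof -
  { fix k j
    have "(\<Sum>k\<in>UNIV. (cmod (Y$k$j))^2) = 0"
      using cadj_mult_self_entry_real[of Y j] assms by simp
    then have "(cmod (Y$k$j))^2 = 0"
      using sum_nonneg_eq_0_iff[of UNIV "\<lambda>k. (cmod (Y$k$j))^2"] by simp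
    then have "Y$k$j = 0" by simp }
  then show ?thesis by (simp add: vec_eq_iff)
qed

lemma unitary_entries:
  assumes "cadj (U::'n::finite cmat) ** U = mat 1" shows "cmod (U$k$j) \<le> 1"
proof -
  have "(\<Sum>k\<in>UNIV. (cmod (U$k$j))^2) = 1"
    using cadj_mult_self_entry_real[of U j] assms by (simp add: mat_def)
  then have "(cmod (U$k$j))^2 \<le> 1"
    using member_le_sum[of k UNIV "\<lambda>k. (cmod (U$k$j))^2"] by simp
  show ?thesis
  proof (rule ccontr)
    assume "\<not> cmod (U$k$j) \<le> 1"
    then have "1 < (cmod (U$k$j))^2" by (simp add: one_less_power)
    with \<open>(cmod (U$k$j))^2 \<le> 1\<close> show False by simp
  qed
qed

lemma unitary_norm: assumes "cadj (U::'n::finite cmat) ** U = mat 1" shows "norm U \<le> real (CARD('n))^2"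
  using unitary_entries[OF assms] norm_cmat_entries_le1 by blast

lemma unitary_norm_adj: assumes "cadj (U::'n::finite cmat) ** U = mat 1" shows "norm (cadj U) \<le> real (CARD('n))^2"
  using unitary_entries[OF assms] by (intro norm_cmat_entries_le1) (simp add: cadj_def)

lemma sandwich_const:
  fixes Y1 Y2 H :: "real \<Rightarrow> 'n::finite cmat"
  assumes d1: "\<forall>t\<in>{0..T}. (Y1 has_vector_derivative mat (-\<i>) ** (H t ** Y1 t)) (at t within {0..T})"
    and d2: "\<forall>t\<in>{0..T}. (Y2 has_vector_derivative mat (-\<i>) ** (H t ** Y2 t)) (at t within {0..T})"
    and h: "\<forall>t\<in>{0..T}. hermitian (H t)"
    and t: "t \<in> {0..T}" and T: "0 \<le> T"
  shows "cadj (Y1 t) ** Y2 t = cadj (Y1 0) ** Y2 0"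
proof -
  have "\<forall>s\<in>{0..T}. ((\<lambda>s. cadj (Y1 s) ** mat 1 ** Y2 s) has_vector_derivative 0) (at s within {0..T})"
  proof
    fix s assume s: "s \<in> {0..T}"
    show "((\<lambda>s. cadj (Y1 s) ** mat 1 ** Y2 s) has_vector_derivative 0) (at s within {0..T})"
      using sandwich_deriv[of Y1 H s "{0..T}" Y2 H "mat 1"] d1 d2 h s by simp
  qed
  moreover have cv: "convex {0..T::real}" by (rule convex_real_interval)
  ultimately obtain c where c: "\<And>x. x \<in> {0..T} \<Longrightarrow> cadj (Y1 x) ** mat 1 ** Y2 x = c"
    using has_vector_derivative_zero_constant[OF cv, of "\<lambda>s. cadj (Y1 s) ** mat 1 ** Y2 s"] by blast
  have "cadj (Y1 t) ** mat 1 ** Y2 t = c" using c t by blast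
  moreover have "cadj (Y1 0) ** mat 1 ** Y2 0 = c" using c T by simp
  ultimately show ?thesis by simp
qed

lemma evolution_unitary:
  fixes U H :: "real \<Rightarrow> 'n::finite cmat"
  assumes ev: "evolution T H U" and h: "\<forall>t\<in>{0..T}. hermitian (H t)"
    and t: "t \<in> {0..T}"
  shows "cadj (U t) ** U t = mat 1" "U t ** cadj (U t) = mat 1"
proof -
  have T: "0 \<le> T" using t by simp
  from ev have d: "\<forall>t\<in>{0..T}. (U has_vector_derivative mat (-\<i>) ** (H t ** U t)) (at t within {0..T})"
    and u0: "U 0 = mat 1" by (auto simp: evolution_def)
  show 1: "cadj (U t) ** U t = mat 1"
    using sandwich_const[OF d d h t T] u0 by (simp add: cadj_mat)
  show "U t ** cadj (U t) = mat 1" using 1 matrix_left_right_inverse by blast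
qed




lemma mvt_vec:
  fixes f f' :: "real \<Rightarrow> 'a::real_normed_vector"
  assumes ab: "a \<le> b"
    and d: "\<And>x. x\<in>{a..b} \<Longrightarrow> (f has_vector_derivative f' x) (at x within {a..b})"
    and B: "\<And>x. x\<in>{a..b} \<Longrightarrow> norm (f' x) \<le> B"
  shows "norm (f b - f a) \<le> B * (b - a)"
proof -
  have "norm (f b - f a) \<le> B * norm (b - a)"
  proof (rule differentiable_bound[of "{a..b}" f "\<lambda>x h. h *\<^sub>R f' x"])
    show "convex {a..b}" by (rule convex_real_interval)
    show "\<And>x. x \<in> {a..b} \<Longrightarrow> (f has_derivative (\<lambda>h. h *\<^sub>R f' x)) (at x within {a..b})"
      using d by (simp add: has_vector_derivative_def)
    fix x assume x: "x \<in> {a..b}"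
    have "onorm (\<lambda>h::real. h *\<^sub>R f' x) = onorm (\<lambda>h::real. h) * norm (f' x)"
      by (rule onorm_scaleR_left) (rule bounded_linear_ident)
    also have "\<dots> = norm (f' x)" using onorm_id[where 'a=real] by (simp add: id_def)
    finally show "onorm (\<lambda>h::real. h *\<^sub>R f' x) \<le> B" using B[OF x] by simp
  qed (use ab in auto)
  then show ?thesis using ab by simp
qed

definition Eij :: "'n::finite \<Rightarrow> 'n \<Rightarrow> 'n cmat" where
  "Eij i j = (\<chi> k l. if k = i \<and> l = j then 1 else 0)"

lemma cmat_decomp: "(X::'n::finite cmat) = (\<Sum>i\<in>UNIV. \<Sum>j\<in>UNIV. mat (X$i$j) ** Eij i j)"
proof -
  have inner: "(\<Sum>xa\<in>UNIV. if i = x \<and> ia = xa then X$x$xa else 0) = (if i = x then X$x$ia else 0)" for i ia x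
    by (cases "i = x") auto
  show ?thesis
    by (simp add: vec_eq_iff mat_left Eij_def sum_component if_distrib if_distribR inner cong: if_cong)
qed

lemma ui_basic:
  fixes N :: "'n::finite cmat \<Rightarrow> real"
  assumes "unitarily_invariant_norm N"
  shows "N 0 = 0" "N X \<ge> 0" "N (X + Y) \<le> N X + N Y" "N (mat c ** X) = cmod c * N X"
proof -
  show 0: "N 0 = 0" using assms by (simp add: unitarily_invariant_norm_def)
  show t: "N (X + Y) \<le> N X + N Y" using assms by (simp add: unitarily_invariant_norm_def)
  show h: "N (mat c ** X) = cmod c * N X" for c X using assms by (simp add: unitarily_invariant_norm_def)
  from assms have tri: "\<forall>X Y. N (X + Y) \<le> N X + N Y" by (simp add: unitarily_invariant_norm_def)
  have eq: "X + mat (-1) ** X = 0" by (simp add: mat_uminus)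
  have "N (X + mat (-1) ** X) \<le> N X + N (mat (-1) ** X)" using tri by blast
  then have "N 0 \<le> N X + N (mat (-1) ** X)" by (metis eq)
  then show "N X \<ge> 0" using 0 h[of "-1" X] by simp
qed

lemma ui_sum:
  fixes N :: "'n::finite cmat \<Rightarrow> real"
  assumes "unitarily_invariant_norm N"
  shows "N (\<Sum>x\<in>S. f x) \<le> (\<Sum>x\<in>S. N (f x))"
proof (induction S rule: infinite_finite_induct)
  case (insert x F)
  then show ?case using ui_basic(3)[OF assms, of "f x" "sum f F"] by simp
qed (auto simp: ui_basic(1)[OF assms])

lemma ui_norm_bound:
  fixes N :: "'n::finite cmat \<Rightarrow> real"
  assumes ui: "unitarily_invariant_norm N"
  shows "\<exists>c. \<forall>X. N X \<le> c * norm X"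
proof (intro exI allI)
  fix X :: "'n cmat"
  have "N X = N (\<Sum>i\<in>UNIV. \<Sum>j\<in>UNIV. mat (X$i$j) ** Eij i j)"
    using cmat_decomp[of X] by simp
  also have "\<dots> \<le> (\<Sum>i\<in>UNIV. N (\<Sum>j\<in>UNIV. mat (X$i$j) ** Eij i j))" by (rule ui_sum[OF ui])
  also have "\<dots> \<le> (\<Sum>i\<in>UNIV. \<Sum>j\<in>UNIV. N (mat (X$i$j) ** Eij i j))"
    by (intro sum_mono ui_sum[OF ui])
  also have "\<dots> \<le> (\<Sum>i\<in>UNIV. \<Sum>j\<in>UNIV. norm X * N (Eij i j))"
  proof (intro sum_mono)
    fix i j
    have "cmod (X$i$j) \<le> norm X" using Finite_Cartesian_Product.norm_nth_le[where x="X$i" and i=j] Finite_Cartesian_Product.norm_nth_le[where x=X and i=i] by linarith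
    then show "N (mat (X$i$j) ** Eij i j) \<le> norm X * N (Eij i j)"
      using ui_basic(2,4)[OF ui] by (simp add: mult_right_mono)
  qed
  also have "\<dots> = (\<Sum>i\<in>UNIV. \<Sum>j\<in>UNIV. N (Eij i j)) * norm X"
    by (simp add: sum_distrib_left sum_distrib_right mult.commute)
  finally show "N X \<le> (\<Sum>i\<in>UNIV. \<Sum>j\<in>UNIV. N (Eij i j)) * norm X" .
qed

lemma final_limit:
  fixes N :: "'n::finite cmat \<Rightarrow> real" and D :: "real \<Rightarrow> 'n cmat"
  assumes ui: "unitarily_invariant_norm N"
    and b: "\<forall>E\<ge>E0. norm (D E) \<le> C / E"
  shows "((\<lambda>E. N (D E)) \<longlongrightarrow> 0) at_top"
proof -
  obtain c where c: "\<forall>X. N X \<le> c * norm X" using ui_norm_bound[OF ui] by blast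
  have c0: "c \<ge> 0"
  proof -
    have "N (mat 1) \<le> c * norm (mat 1 :: 'n cmat)" using c by blast
    moreover have nz: "(mat 1 :: 'n cmat) \<noteq> 0"
    proof
      assume "(mat 1 :: 'n cmat) = 0"
      then have "(mat 1::'n cmat) $ i $ i = (0::'n cmat) $ i $ i" for i by simp
      then show False by (simp add: mat_def)
    qed
    moreover have "N (mat 1 :: 'n cmat) > 0"
      using ui ui_basic(2)[OF ui, of "mat 1"] nz unfolding unitarily_invariant_norm_def
      by (metis less_eq_real_def)
    moreover have "norm (mat 1 :: 'n cmat) > 0"
      using nz by simp
    ultimately show ?thesis by (metis linorder_not_le mult_nonpos_nonneg less_eq_real_def order.strict_trans2 )
  qed
  have lim: "((\<lambda>E. c * C / E) \<longlongrightarrow> 0) at_top"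
    by (intro tendsto_divide_0[OF tendsto_const] filterlim_at_top_imp_at_infinity filterlim_ident)
  show ?thesis
  proof (rule tendsto_sandwich[OF _ _ tendsto_const lim])
    show "\<forall>\<^sub>F E in at_top. 0 \<le> N (D E)" using ui_basic(2)[OF ui] by simp
    show "\<forall>\<^sub>F E in at_top. N (D E) \<le> c * C / E"
      using eventually_ge_at_top[of E0]
    proof eventually_elim
      case (elim E)
      then have "N (D E) \<le> c * norm (D E)" using c by blast
      also have "\<dots> \<le> c * (C / E)" using mult_left_mono[OF b[rule_format, OF elim] c0] by simp
      finally show ?case by simp
    qed
  qed
qed




lemma prod_le:
  assumes Km: "\<forall>(a::'n::finite cmat) (b::'n cmat). norm (a ** b) \<le> norm a * norm b * Km" "0 \<le> Km"
    and "norm (X::'n cmat) \<le> x" "norm (Y::'n cmat) \<le> y"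
  shows "norm (X ** Y) \<le> x * y * Km"
proof -
  have "norm (X ** Y) \<le> norm X * norm Y * Km" using Km by blast
  also have "\<dots> \<le> x * y * Km"
    using assms by (intro mult_right_mono mult_mono) (auto intro: order_trans[OF norm_ge_zero])
  finally show ?thesis .
qed

lemma scaleR_right_mm: "(A::'n::finite cmat) ** (r *\<^sub>R B) = r *\<^sub>R (A ** B)"
  by (simp add: matrix_scalar_ac scalar_matrix_assoc)
lemma scaleR_left_mm: "(r *\<^sub>R A) ** (B::'n::finite cmat) = r *\<^sub>R (A ** B)"
  by (simp add: scalar_matrix_assoc)

locale proj =
  fixes Q :: "real \<Rightarrow> 'n::finite cmat" and \<Lambda> :: "real set"
  assumes fin: "finite \<Lambda>"
    and Qh: "\<forall>a\<in>\<Lambda>. hermitian (Q a)"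
    and Qo: "\<forall>a\<in>\<Lambda>. \<forall>b\<in>\<Lambda>. Q a ** Q b = (if a = b then Q a else 0)"
    and Qc: "(\<Sum>a\<in>\<Lambda>. Q a) = mat 1"
begin

lemma Q_left_sum:
  fixes X :: "real \<Rightarrow> 'n cmat"
  assumes a: "a \<in> \<Lambda>" and S: "S \<subseteq> \<Lambda>"
  shows "Q a ** (\<Sum>b\<in>S. Q b ** X b) = (if a \<in> S then Q a ** X a else 0)"
proof -
  have fS: "finite S" using S fin finite_subset by blast
  have "Q a ** (\<Sum>b\<in>S. Q b ** X b) = (\<Sum>b\<in>S. Q a ** (Q b ** X b))" by (rule matrix_sum_ldistrib)
  also have "\<dots> = (\<Sum>b\<in>S. if a = b then Q a ** X a else 0)"
    by (rule sum.cong) (use Qo a S in \<open>auto simp: matrix_mul_assoc\<close>)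
  also have "\<dots> = (if a \<in> S then Q a ** X a else 0)" using fS by simp
  finally show ?thesis .
qed

lemma Q_right_sum:
  fixes X :: "real \<Rightarrow> 'n cmat"
  assumes a: "a \<in> \<Lambda>" and S: "S \<subseteq> \<Lambda>"
  shows "(\<Sum>b\<in>S. X b ** Q b) ** Q a = (if a \<in> S then X a ** Q a else 0)"
proof -
  have fS: "finite S" using S fin finite_subset by blast
  have "(\<Sum>b\<in>S. X b ** Q b) ** Q a = (\<Sum>b\<in>S. X b ** Q b ** Q a)" by (rule matrix_sum_rdistrib)
  also have "\<dots> = (\<Sum>b\<in>S. if a = b then X a ** Q a else 0)"
    by (rule sum.cong) (use Qo a S in \<open>auto simp: matrix_mul_assoc[symmetric]\<close>)
  also have "\<dots> = (if a \<in> S then X a ** Q a else 0)" using fS by simp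
  finally show ?thesis .
qed

lemma Q_left_sum0:
  assumes a: "a \<in> \<Lambda>" and S: "S \<subseteq> \<Lambda>"
  shows "Q a ** (\<Sum>b\<in>S. Q b) = (if a \<in> S then Q a else 0)"
  using Q_left_sum[OF a S, of "\<lambda>_. mat 1"] by simp

lemma Q_right_sum0:
  assumes a: "a \<in> \<Lambda>" and S: "S \<subseteq> \<Lambda>"
  shows "(\<Sum>b\<in>S. Q b) ** Q a = (if a \<in> S then Q a else 0)"
  using Q_right_sum[OF a S, of "\<lambda>_. mat 1"] by simp

definition "Aop = (\<Sum>a\<in>\<Lambda>. mat (complex_of_real a) ** Q a)"

lemma QA: "a \<in> \<Lambda> \<Longrightarrow> Q a ** Aop = mat (complex_of_real a) ** Q a"
  unfolding Aop_def using Q_left_sum[of a \<Lambda> "\<lambda>b. mat (complex_of_real b)"]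
  by (simp add: mat_comm)

lemma AQ: "a \<in> \<Lambda> \<Longrightarrow> Aop ** Q a = mat (complex_of_real a) ** Q a"
  unfolding Aop_def using Q_right_sum[of a \<Lambda> "\<lambda>b. mat (complex_of_real b)"] by simp

lemma hermitian_Q: "a \<in> \<Lambda> \<Longrightarrow> cadj (Q a) = Q a"
  using Qh by (simp add: hermitian_def)

lemma hermitian_A: "cadj Aop = Aop"
  unfolding Aop_def by (simp add: cadj_sum cadj_mult hermitian_Q cadj_mat mat_comm)

end

context proj begin

definition "Pop I = (\<Sum>a\<in>I. Q a)"
definition "Wop I V = (\<Sum>a\<in>I. Q a ** V ** Q a)"

lemma QP: "a \<in> \<Lambda> \<Longrightarrow> I \<subseteq> \<Lambda> \<Longrightarrow> Q a ** Pop I = (if a \<in> I then Q a else 0)"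
  unfolding Pop_def by (rule Q_left_sum0)
lemma PQ: "a \<in> \<Lambda> \<Longrightarrow> I \<subseteq> \<Lambda> \<Longrightarrow> Pop I ** Q a = (if a \<in> I then Q a else 0)"
  unfolding Pop_def by (rule Q_right_sum0)

lemma PP: assumes "I \<subseteq> \<Lambda>" shows "Pop I ** Pop I = Pop I"
proof -
  have "Pop I ** Pop I = (\<Sum>a\<in>I. Pop I ** Q a)" unfolding Pop_def[of I, symmetric]
    by (subst (2) Pop_def) (rule matrix_sum_ldistrib)
  also have "\<dots> = (\<Sum>a\<in>I. Q a)" by (rule sum.cong) (use assms in \<open>auto simp: PQ subset_iff\<close>)
  finally show ?thesis by (simp add: Pop_def)
qed

lemma PA: assumes I: "I \<subseteq> \<Lambda>" shows "Pop I ** Aop = Aop ** Pop I"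
proof -
  have "Pop I ** Aop = (\<Sum>a\<in>I. Q a ** Aop)" unfolding Pop_def by (rule matrix_sum_rdistrib)
  also have "\<dots> = (\<Sum>a\<in>I. Aop ** Q a)" by (rule sum.cong) (use I in \<open>auto simp: QA AQ subset_iff\<close>)
  also have "\<dots> = Aop ** Pop I" unfolding Pop_def by (rule matrix_sum_ldistrib[symmetric])
  finally show ?thesis .
qed

lemma PW: assumes I: "I \<subseteq> \<Lambda>" shows "Pop I ** Wop I V = Wop I V" "Wop I V ** Pop I = Wop I V"
proof -
  have "Pop I ** Wop I V = (\<Sum>a\<in>I. Pop I ** Q a ** V ** Q a)"
    unfolding Wop_def by (simp add: matrix_sum_ldistrib matrix_mul_assoc)
  also have "\<dots> = Wop I V" unfolding Wop_def by (rule sum.cong) (use I in \<open>auto simp: PQ subset_iff\<close>)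
  finally show "Pop I ** Wop I V = Wop I V" .
  have "Wop I V ** Pop I = (\<Sum>a\<in>I. Q a ** V ** (Q a ** Pop I))"
    unfolding Wop_def by (simp add: matrix_sum_rdistrib matrix_mul_assoc)
  also have "\<dots> = Wop I V" unfolding Wop_def by (rule sum.cong) (use I in \<open>auto simp: QP subset_iff\<close>)
  finally show "Wop I V ** Pop I = Wop I V" .
qed

lemma hermitian_W: assumes I: "I \<subseteq> \<Lambda>" and V: "cadj V = V" shows "cadj (Wop I V) = Wop I V"
  unfolding Wop_def cadj_sum
  by (rule sum.cong) (use I V hermitian_Q in \<open>auto simp: cadj_mult matrix_mul_assoc\<close>)

end




context proj begin

lemma core:
  fixes K :: "real \<Rightarrow> 'n cmat" and V :: "'n cmat" and UV UW :: "real \<Rightarrow> real \<Rightarrow> 'n cmat"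
  assumes T0: "T > 0" and Kc: "continuous_on {0..T} K" and Kh: "\<forall>t\<in>{0..T}. hermitian (K t)"
    and Vh: "hermitian V" and Isub: "I \<subseteq> \<Lambda>"
    and KP: "\<forall>t\<in>{0..T}. K t ** Pop I = Pop I ** K t"
    and UVe: "\<forall>E>0. evolution T (\<lambda>t. K t + E *\<^sub>R Aop + V) (UV E)"
    and UWe: "\<forall>E>0. evolution T (\<lambda>t. K t + E *\<^sub>R Aop + Wop I V) (UW E)"
  shows "\<exists>C. \<forall>E\<ge>1. norm (UV E T ** Pop I - UW E T ** Pop I) \<le> C / E"
proof -
  define P where "P = Pop I"
  define W where "W = Wop I V"
  obtain Km where Km: "\<forall>(a::'n cmat) (b::'n cmat). norm (a ** b) \<le> norm a * norm b * Km" "0 < Km"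
    using bounded_bilinear.pos_bounded[OF bb_mm] by (metis mult.commute mult.left_commute)
  have Km0: "0 \<le> Km" using Km by simp
  note pl = prod_le[OF Km(1) Km0]
  define u where "u = real (CARD('n))^2"
  obtain kK where kK: "\<forall>s\<in>{0..T}. norm (K s) \<le> kK"
    using compact_imp_bounded[OF compact_continuous_image[OF Kc compact_Icc]]
    unfolding bounded_iff by blast
  have fin2: "finite (\<Lambda> - {a})" for a using fin by simp
  have finI: "finite I" using Isub fin finite_subset by blast
  have Vh': "cadj V = V" using Vh by (simp add: hermitian_def)
  have Wh: "cadj W = W" unfolding W_def by (rule hermitian_W[OF Isub Vh'])
  define M where "M a b = Q b ** V ** Q a" for a b
  define Rr where "Rr a b s = (K s + V) ** M a b - M a b ** (K s + W)" for a b s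
  define r where "r a b = (kK + norm V) * norm (M a b) * Km + norm (M a b) * (kK + norm W) * Km" for a b
  define \<beta> where "\<beta> a b = (norm (mat \<i> :: 'n cmat) * u * Km) * (r a b * (u * norm P * Km) * Km) * Km" for a b
  define \<gamma> where "\<gamma> a b = ((u * norm (M a b) * Km) * u * Km) * norm P * Km" for a b
  define G0 where "G0 = (\<Sum>a\<in>I. \<Sum>b\<in>\<Lambda>-{a}. \<beta> a b / \<bar>b - a\<bar>)"
  define \<Gamma> where "\<Gamma> = (\<Sum>a\<in>I. \<Sum>b\<in>\<Lambda>-{a}. \<gamma> a b / \<bar>b - a\<bar>)"
  have Rr_bound: "norm (Rr a b s) \<le> r a b" if "s \<in> {0..T}" for a b s
  proof -
    have "norm (K s + V) \<le> kK + norm V" using kK that norm_triangle_ineq[of "K s" V] by fastforce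
    moreover have "norm (K s + W) \<le> kK + norm W" using kK that norm_triangle_ineq[of "K s" W] by fastforce
    ultimately have "norm ((K s + V) ** M a b) \<le> (kK + norm V) * norm (M a b) * Km"
       "norm (M a b ** (K s + W)) \<le> norm (M a b) * (kK + norm W) * Km"
      by (auto intro!: pl)
    then show ?thesis unfolding Rr_def r_def using norm_triangle_ineq4 by (smt (verit))
  qed
  show ?thesis
  proof (intro exI allI impI)
    fix E :: real assume E1: "1 \<le> E"
    show "norm (UV E T ** Pop I - UW E T ** Pop I) \<le> u * Km * (T * G0 + 2 * \<Gamma>) / E"
    proof -
    have E0: "E > 0" using E1 by simp
    have T0': "0 \<le> T" using T0 by simp
    define HV where "HV t = K t + E *\<^sub>R Aop + V" for t
    define HW where "HW t = K t + E *\<^sub>R Aop + W" for t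
    have hV: "\<forall>t\<in>{0..T}. hermitian (HV t)"
      using Kh Vh' by (simp add: HV_def hermitian_def cadj_add cadj_scaleR hermitian_A)
    have hW: "\<forall>t\<in>{0..T}. hermitian (HW t)"
      using Kh Wh by (simp add: HW_def hermitian_def cadj_add cadj_scaleR hermitian_A)
    have evV: "evolution T HV (UV E)" unfolding HV_def using UVe E0 by simp
    have evW: "evolution T HW (UW E)" unfolding HW_def W_def using UWe E0 by simp
    have dV: "\<forall>t\<in>{0..T}. (UV E has_vector_derivative mat (-\<i>) ** (HV t ** UV E t)) (at t within {0..T})"
      using evV by (simp add: evolution_def)
    have dW: "\<forall>t\<in>{0..T}. (UW E has_vector_derivative mat (-\<i>) ** (HW t ** UW E t)) (at t within {0..T})"
      using evW by (simp add: evolution_def)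
    have UV0: "UV E 0 = mat 1" using evV by (simp add: evolution_def)
    have UW0: "UW E 0 = mat 1" using evW by (simp add: evolution_def)
    have uV: "cadj (UV E t) ** UV E t = mat 1" "UV E t ** cadj (UV E t) = mat 1" if "t \<in> {0..T}" for t
      using evolution_unitary[OF evV hV that] by auto
    have uW: "cadj (UW E t) ** UW E t = mat 1" if "t \<in> {0..T}" for t
      using evolution_unitary[OF evW hW that] by auto
    have nUV: "norm (UV E t) \<le> u" "norm (cadj (UV E t)) \<le> u" "norm (UW E t) \<le> u" if "t \<in> {0..T}" for t
      using unitary_norm[OF uV(1)[OF that]] unitary_norm_adj[OF uV(1)[OF that]] unitary_norm[OF uW[OF that]]
      by (auto simp: u_def)
    have PHW: "P ** HW t = HW t ** P" if t: "t \<in> {0..T}" for t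
      using KP t by (simp add: HW_def matrix_add_ldistrib matrix_add_rdistrib' scaleR_right_mm scaleR_left_mm
          P_def W_def PA[OF Isub] PW[OF Isub])
    have inv: "P ** (UW E t ** P) = UW E t ** P" if t: "t \<in> {0..T}" for t
    proof -
      define Y where "Y s = (mat 1 - P) ** UW E s ** P" for s
      have dY: "\<forall>s\<in>{0..T}. (Y has_vector_derivative mat (-\<i>) ** (HW s ** Y s)) (at s within {0..T})"
      proof
        fix s assume s: "s \<in> {0..T}"
        have d0: "(Y has_vector_derivative (mat 1 - P) ** (mat (-\<i>) ** (HW s ** UW E s)) ** P) (at s within {0..T})"
          unfolding Y_def
          using bounded_bilinear.has_vector_derivative[OF bb_mm
              bounded_bilinear.has_vector_derivative[OF bb_mm has_vector_derivative_const dW[rule_format, OF s]]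
              has_vector_derivative_const] by simp
        have c1: "(mat 1 - P) ** HW s = HW s ** (mat 1 - P)"
          using PHW[OF s] by (simp add: matrix_diff_ldistrib matrix_diff_rdistrib)
        have "(mat 1 - P) ** (mat (-\<i>) ** (HW s ** UW E s)) ** P
              = mat (-\<i>) ** (((mat 1 - P) ** HW s) ** UW E s) ** P"
          by (simp only: matrix_mul_assoc mat_comm[of "mat 1 - P"])
        also have "\<dots> = mat (-\<i>) ** ((HW s ** (mat 1 - P)) ** UW E s) ** P" by (simp only: c1)
        also have "\<dots> = mat (-\<i>) ** (HW s ** Y s)" unfolding Y_def by (simp only: matrix_mul_assoc)
        finally have eq: "(mat 1 - P) ** (mat (-\<i>) ** (HW s ** UW E s)) ** P = mat (-\<i>) ** (HW s ** Y s)" .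
        show "(Y has_vector_derivative mat (-\<i>) ** (HW s ** Y s)) (at s within {0..T})"
          using d0 unfolding eq .
      qed
      have "cadj (Y t) ** Y t = cadj (Y 0) ** Y 0" by (rule sandwich_const[OF dY dY hW t T0'])
      moreover have "Y 0 = 0" unfolding Y_def using PP[OF Isub]
        by (simp add: UW0 P_def matrix_diff_rdistrib)
      ultimately have "Y t = 0" using cadj_self_zero by simp
      then have h: "UW E t ** P - P ** UW E t ** P = 0" unfolding Y_def by (simp add: matrix_diff_rdistrib)
      then show ?thesis by (metis eq_iff_diff_eq_0 matrix_mul_assoc)
    qed
    have key1: "HV t ** mat 1 - mat 1 ** HW t = V - W" for t by (simp add: HV_def HW_def)
    have key2: "HV t ** M a b - M a b ** HW t = mat (of_real (E * (b - a))) ** M a b + Rr a b t"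
      if a: "a \<in> \<Lambda>" and b: "b \<in> \<Lambda>" for a b t
    proof -
      have 1: "Aop ** M a b = mat (of_real b) ** M a b"
        unfolding M_def using AQ[OF b] by (simp add: matrix_mul_assoc)
      have "M a b ** Aop = Q b ** V ** (Q a ** Aop)" by (simp add: M_def matrix_mul_assoc)
      also have "\<dots> = mat (of_real a) ** M a b" using QA[OF a] by (simp add: M_def mat_assoc_right)
      finally have 2: "M a b ** Aop = mat (of_real a) ** M a b" .
      have 3: "E *\<^sub>R (mat (of_real b) ** M a b) - E *\<^sub>R (mat (of_real a) ** M a b)
             = mat (of_real (E * (b - a))) ** M a b"
        by (simp add: mat_left vec_eq_iff scaleR_conv_of_real[where 'a=complex] algebra_simps)
      have "HV t ** M a b - M a b ** HW t = K t ** M a b + E *\<^sub>R (mat (of_real b) ** M a b) + V ** M a b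
          - (M a b ** K t + E *\<^sub>R (mat (of_real a) ** M a b) + M a b ** W)"
        by (simp add: HV_def HW_def matrix_add_ldistrib matrix_add_rdistrib' scaleR_left_mm scaleR_right_mm 1 2)
      also have "\<dots> = (E *\<^sub>R (mat (of_real b) ** M a b) - E *\<^sub>R (mat (of_real a) ** M a b))
          + ((K t + V) ** M a b - M a b ** (K t + W))"
        by (simp add: matrix_add_ldistrib matrix_add_rdistrib' algebra_simps)
      finally show ?thesis unfolding 3 Rr_def .
    qed
    have keyZ: "(V - W) ** (UW E t ** P) = (\<Sum>a\<in>I. \<Sum>b\<in>\<Lambda>-{a}. M a b ** (UW E t ** P))"
      if t: "t \<in> {0..T}" for t
    proof -
      define Z where "Z = UW E t ** P"
      have PZ: "P ** Z = Z" unfolding Z_def by (rule inv[OF t])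
      have inner: "(\<Sum>b\<in>\<Lambda>-{a}. M a b ** Z) = V ** Q a ** Z - Q a ** V ** Q a ** Z" if a: "a \<in> I" for a
      proof -
        have aL: "a \<in> \<Lambda>" using a Isub by blast
        have "(\<Sum>b\<in>\<Lambda>. M a b ** Z) = (\<Sum>b\<in>\<Lambda>. Q b) ** (V ** Q a ** Z)"
          by (simp add: matrix_sum_rdistrib M_def matrix_mul_assoc)
        also have "\<dots> = V ** Q a ** Z" by (simp add: Qc)
        finally have "(\<Sum>b\<in>\<Lambda>. M a b ** Z) = V ** Q a ** Z" .
        moreover have "(\<Sum>b\<in>\<Lambda>. M a b ** Z) = M a a ** Z + (\<Sum>b\<in>\<Lambda>-{a}. M a b ** Z)"
          by (rule sum.remove[OF fin aL])
        ultimately show ?thesis by (simp add: M_def algebra_simps)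
      qed
      have "(\<Sum>a\<in>I. \<Sum>b\<in>\<Lambda>-{a}. M a b ** Z) = (\<Sum>a\<in>I. V ** Q a ** Z - Q a ** V ** Q a ** Z)"
        by (rule sum.cong) (auto simp: inner)
      also have "\<dots> = V ** P ** Z - W ** Z"
        by (simp add: sum_subtractf P_def W_def Pop_def Wop_def matrix_sum_rdistrib matrix_sum_ldistrib)
      also have "\<dots> = (V - W) ** Z" using PZ by (simp add: matrix_diff_rdistrib flip: matrix_mul_assoc)
      finally show ?thesis unfolding Z_def by simp
    qed
    have inv_scale: "(1 / w) *\<^sub>R (mat (of_real w) ** Y) = Y" if "w \<noteq> 0" for w and Y :: "'n cmat"
      using that by (simp add: mat_left vec_eq_iff scaleR_conv_of_real[where 'a=complex] flip: of_real_mult)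
    define S where "S s = (\<Sum>a\<in>I. \<Sum>b\<in>\<Lambda>-{a}. (1 / (E * (b - a))) *\<^sub>R (cadj (UV E s) ** M a b ** UW E s ** P))" for s
    define \<Phi> where "\<Phi> s = cadj (UV E s) ** mat 1 ** UW E s ** P - S s" for s
    define \<Phi>' where "\<Phi>' t = - (\<Sum>a\<in>I. \<Sum>b\<in>\<Lambda>-{a}. (1 / (E * (b - a))) *\<^sub>R
        (mat \<i> ** cadj (UV E t) ** (Rr a b t ** (UW E t ** P))))" for t
    have dD: "((\<lambda>s. cadj (UV E s) ** C ** UW E s ** P) has_vector_derivative
        mat \<i> ** cadj (UV E t) ** ((HV t ** C - C ** HW t) ** (UW E t ** P))) (at t within {0..T})"
      if t: "t \<in> {0..T}" for C t
      using bounded_bilinear.has_vector_derivative[OF bb_mm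
          sandwich_deriv[of "UV E" HV t "{0..T}" "UW E" HW C, OF dV[rule_format,OF t] dW[rule_format, OF t] hV[rule_format, OF t]]
          has_vector_derivative_const[of P]]
      by (simp add: matrix_mul_assoc)
    have d\<Phi>: "(\<Phi> has_vector_derivative \<Phi>' t) (at t within {0..T})" if t: "t \<in> {0..T}" for t
    proof -
      define L where "L X = mat \<i> ** cadj (UV E t) ** (X ** (UW E t ** P))" for X
      have Ladd: "L (X + Y) = L X + L Y" for X Y
        by (simp add: L_def matrix_add_rdistrib' matrix_add_ldistrib)
      have Lmat: "L (mat c ** X) = mat c ** L X" for c X
        unfolding L_def by (simp only: matrix_mul_assoc[symmetric, of "mat c" X] mat_assoc_right[of "mat \<i> ** cadj (UV E t)"])
      have d: "(\<Phi> has_vector_derivative (L (HV t ** mat 1 - mat 1 ** HW t) -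
          (\<Sum>a\<in>I. \<Sum>b\<in>\<Lambda>-{a}. (1/(E*(b-a))) *\<^sub>R L (HV t ** M a b - M a b ** HW t)))) (at t within {0..T})"
        unfolding \<Phi>_def S_def L_def
        by (intro has_vector_derivative_diff has_vector_derivative_sum
            bounded_linear.has_vector_derivative[OF bounded_linear_scaleR_right] dD t)
      have A: "(\<Sum>a\<in>I. \<Sum>b\<in>\<Lambda>-{a}. (1/(E*(b-a))) *\<^sub>R L (HV t ** M a b - M a b ** HW t))
          = (\<Sum>a\<in>I. \<Sum>b\<in>\<Lambda>-{a}. L (M a b) + (1/(E*(b-a))) *\<^sub>R L (Rr a b t))"
      proof (intro sum.cong refl)
        fix a b assume a: "a \<in> I" and b: "b \<in> \<Lambda> - {a}"
        have aL: "a \<in> \<Lambda>" using a Isub by blast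
        have w: "E * (b - a) \<noteq> 0" using E0 b by simp
        show "(1/(E*(b-a))) *\<^sub>R L (HV t ** M a b - M a b ** HW t) = L (M a b) + (1/(E*(b-a))) *\<^sub>R L (Rr a b t)"
          using b by (simp add: key2[OF aL] Ladd Lmat scaleR_add_right inv_scale[OF w] del: of_real_mult of_real_diff)
      qed
      have C: "L (HV t ** mat 1 - mat 1 ** HW t) = (\<Sum>a\<in>I. \<Sum>b\<in>\<Lambda>-{a}. L (M a b))"
        unfolding key1 L_def keyZ[OF t] by (simp add: matrix_sum_ldistrib)
      show ?thesis using d unfolding A C
        by (simp add: \<Phi>'_def L_def sum.distrib)
    qed
    have sumbnd: "norm (\<Sum>a\<in>I. \<Sum>b\<in>\<Lambda>-{a}. (1 / (E * (b - a))) *\<^sub>R X a b)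
        \<le> (\<Sum>a\<in>I. \<Sum>b\<in>\<Lambda>-{a}. c a b / \<bar>b - a\<bar>) / E"
      if X: "\<And>a b. a \<in> I \<Longrightarrow> b \<in> \<Lambda> - {a} \<Longrightarrow> norm (X a b) \<le> c a b" for X :: "real \<Rightarrow> real \<Rightarrow> 'n cmat" and c
    proof -
      have "norm (\<Sum>a\<in>I. \<Sum>b\<in>\<Lambda>-{a}. (1 / (E * (b - a))) *\<^sub>R X a b)
          \<le> (\<Sum>a\<in>I. \<Sum>b\<in>\<Lambda>-{a}. norm ((1 / (E * (b - a))) *\<^sub>R X a b))"
        by (rule order_trans[OF norm_sum sum_mono[OF norm_sum]])
      also have "\<dots> \<le> (\<Sum>a\<in>I. \<Sum>b\<in>\<Lambda>-{a}. (1 / E) * (c a b / \<bar>b - a\<bar>))"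
      proof (intro sum_mono)
        fix a b assume a: "a \<in> I" and b: "b \<in> \<Lambda> - {a}"
        have "norm ((1 / (E * (b - a))) *\<^sub>R X a b) = (1 / (E * \<bar>b - a\<bar>)) * norm (X a b)"
          using E0 by (simp add: abs_mult)
        also have "\<dots> \<le> (1 / (E * \<bar>b - a\<bar>)) * c a b"
          using X[OF a b] E0 by (intro mult_left_mono) auto
        also have "\<dots> = (1 / E) * (c a b / \<bar>b - a\<bar>)" by simp
        finally show "norm ((1 / (E * (b - a))) *\<^sub>R X a b) \<le> (1 / E) * (c a b / \<bar>b - a\<bar>)" .
      qed
      also have "\<dots> = (\<Sum>a\<in>I. \<Sum>b\<in>\<Lambda>-{a}. c a b / \<bar>b - a\<bar>) / E"
        by (simp add: sum_divide_distrib divide_divide_eq_left mult.commute)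
      finally show ?thesis .
    qed
    have n\<Phi>': "norm (\<Phi>' t) \<le> G0 / E" if t: "t \<in> {0..T}" for t
    proof -
      have "norm (\<Phi>' t) = norm (\<Sum>a\<in>I. \<Sum>b\<in>\<Lambda>-{a}. (1 / (E * (b - a))) *\<^sub>R
        (mat \<i> ** cadj (UV E t) ** (Rr a b t ** (UW E t ** P))))" by (simp add: \<Phi>'_def)
      also have "\<dots> \<le> G0 / E" unfolding G0_def
      proof (rule sumbnd)
        fix a b
        show "norm (mat \<i> ** cadj (UV E t) ** (Rr a b t ** (UW E t ** P))) \<le> \<beta> a b"
          unfolding \<beta>_def
          by (intro pl order_refl nUV[OF t] Rr_bound[OF t])
      qed
      finally show ?thesis .
    qed
    have nS: "norm (S s) \<le> \<Gamma> / E" if s: "s \<in> {0..T}" for s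
      unfolding S_def \<Gamma>_def
    proof (rule sumbnd)
      fix a b
      show "norm (cadj (UV E s) ** M a b ** UW E s ** P) \<le> \<gamma> a b"
        unfolding \<gamma>_def by (intro pl order_refl nUV[OF s])
    qed
    have mv: "norm (\<Phi> T - \<Phi> 0) \<le> G0 / E * (T - 0)"
      by (rule mvt_vec[OF T0' d\<Phi> n\<Phi>'])
    have \<Phi>0: "\<Phi> 0 = P - S 0" by (simp add: \<Phi>_def UV0 UW0 cadj_mat)
    have eqD: "UV E T ** Pop I - UW E T ** Pop I = UV E T ** (P - cadj (UV E T) ** mat 1 ** UW E T ** P)"
      using uV(2)[of T] T0' by (simp add: P_def matrix_diff_ldistrib matrix_mul_assoc)
    have e1: "\<Phi> T = cadj (UV E T) ** mat 1 ** UW E T ** P - S T" by (simp only: \<Phi>_def)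
    have eqP: "P - cadj (UV E T) ** mat 1 ** UW E T ** P = - (\<Phi> T - \<Phi> 0) + S 0 - S T"
      by (simp only: e1 \<Phi>0) (simp add: algebra_simps)
    have tri3: "norm (- X + Y - Z) \<le> norm X + norm Y + norm Z" for X Y Z :: "'n cmat"
    proof -
      have "norm (- X + Y - Z) \<le> norm (- X + Y) + norm Z" by (rule norm_triangle_ineq4)
      moreover have "norm (- X + Y) \<le> norm X + norm Y" using norm_triangle_ineq[of "- X" Y] by simp
      ultimately show ?thesis by simp
    qed
    have "norm (P - cadj (UV E T) ** mat 1 ** UW E T ** P) = norm (- (\<Phi> T - \<Phi> 0) + S 0 - S T)"
      by (simp only: eqP)
    then have "norm (P - cadj (UV E T) ** mat 1 ** UW E T ** P) \<le> norm (\<Phi> T - \<Phi> 0) + norm (S 0) + norm (S T)"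
      using tri3[of "\<Phi> T - \<Phi> 0" "S 0" "S T"] by linarith
    also have "\<dots> \<le> G0 / E * T + \<Gamma> / E + \<Gamma> / E"
      using mv nS[of 0] nS[of T] T0' by simp
    also have "G0 / E * T + \<Gamma> / E + \<Gamma> / E = (T * G0 + 2 * \<Gamma>) / E"
      using E0 by (simp add: field_simps)
    finally have nX: "norm (P - cadj (UV E T) ** mat 1 ** UW E T ** P) \<le> (T * G0 + 2 * \<Gamma>) / E" .
    have "norm (UV E T ** Pop I - UW E T ** Pop I) \<le> u * ((T * G0 + 2 * \<Gamma>) / E) * Km"
      unfolding eqD using T0' by (intro pl nUV nX) auto
    then show ?thesis by (simp add: mult_ac)
    qed
  qed
qed

end



lemma sum_UNIV_pair: "(\<Sum>r\<in>(UNIV::('s::finite \<times> 'b::finite) set). f r) = (\<Sum>x\<in>UNIV. \<Sum>y\<in>UNIV. f (x, y))"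
  by (simp add: sum.cartesian_product)

lemma kron_mult: "kron A B ** kron C D = kron (A ** C) (B ** (D::'b::finite cmat))"
  for A C :: "'s::finite cmat"
  apply (simp add: vec_eq_iff kron_def matrix_matrix_mult_def sum_UNIV_pair sum_product mult_ac)
  apply (intro allI)
  apply (rule sum.swap)
  done

lemma kron_add_left: "kron (A + B) C = kron A C + kron B (C::'b::finite cmat)" for A B :: "'s::finite cmat"
  by (simp add: vec_eq_iff kron_def algebra_simps)
lemma kron_zero_left: "kron 0 (C::'b::finite cmat) = (0 :: ('s::finite \<times> 'b) cmat)"
  by (simp add: vec_eq_iff kron_def)
lemma kron_mat_left: "kron (mat c ** A) (C::'b::finite cmat) = mat c ** kron A C" for A :: "'s::finite cmat"
  by (simp add: vec_eq_iff kron_def mat_left)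
lemma kron_scaleR_left: "kron (r *\<^sub>R A) (C::'b::finite cmat) = r *\<^sub>R kron A C" for A :: "'s::finite cmat"
  by (simp add: vec_eq_iff kron_def scaleR_conv_of_real[where 'a=complex])
lemma kron_sum_left: "kron (\<Sum>a\<in>S. f a) (C::'b::finite cmat) = (\<Sum>a\<in>S. kron (f a) C :: ('s::finite \<times> 'b) cmat)"
  by (induction S rule: infinite_finite_induct) (auto simp: kron_add_left kron_zero_left)
lemma cadj_kron: "cadj (kron A B) = kron (cadj A) (cadj (B::'b::finite cmat))" for A :: "'s::finite cmat"
  by (simp add: vec_eq_iff kron_def cadj_def)
lemma kron_one: "kron (mat 1 :: 's::finite cmat) (mat 1 :: 'b::finite cmat) = mat 1"
  by (simp add: vec_eq_iff kron_def mat_def prod_eq_iff)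

lemma linear_liftS: "linear (liftS :: 's::finite cmat \<Rightarrow> ('s \<times> 'b::finite) cmat)"
  by (rule linearI) (auto simp: liftS_def kron_add_left kron_scaleR_left)

lemma liftS_mult: "liftS A ** liftS B = (liftS (A ** B) :: ('s::finite \<times> 'b::finite) cmat)"
  by (simp add: liftS_def kron_mult)
lemma liftS_liftB: "liftS A ** liftB B = liftB B ** (liftS A :: ('s::finite \<times> 'b::finite) cmat)"
  by (simp add: liftS_def liftB_def kron_mult)




theorem theorem2:
  fixes T :: real
    and HS :: "real \<Rightarrow> 's::finite cmat"
    and HB :: "'b::finite cmat"
    and Hp :: "'s cmat"
    and \<Lambda> :: "real set" and Pr :: "real \<Rightarrow> 's cmat"
    and V :: "('s \<times> 'b) cmat"
    and \<I> :: "real set"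
    and UV UW :: "real \<Rightarrow> real \<Rightarrow> ('s \<times> 'b) cmat"
    and N :: "('s \<times> 'b) cmat \<Rightarrow> real"
  assumes T_pos: "T > 0"
    and HS_cont: "continuous_on {0..T} HS"
    and HS_herm: "\<forall>t\<in>{0..T}. hermitian (HS t)"
    and HB_herm: "hermitian HB"
    and Hp_herm: "hermitian Hp"
    and \<Lambda>_fin: "finite \<Lambda>"
    and Pr_herm: "\<forall>a\<in>\<Lambda>. hermitian (Pr a)"
    and Pr_orth: "\<forall>a\<in>\<Lambda>. \<forall>b\<in>\<Lambda>. Pr a ** Pr b = (if a = b then Pr a else 0)"
    and Pr_nonzero: "\<forall>a\<in>\<Lambda>. Pr a \<noteq> 0"
    and Pr_complete: "(\<Sum>a\<in>\<Lambda>. Pr a) = mat 1"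
    and Hp_spec: "Hp = (\<Sum>a\<in>\<Lambda>. mat (complex_of_real a) ** Pr a)"
    and V_herm: "hermitian V"
    and \<I>_sub: "\<I> \<subseteq> \<Lambda>"
    and comm_P: "\<forall>t\<in>{0..T}. commute (HS t) (\<Sum>a\<in>\<I>. Pr a)"
    and comm_Hp: "\<forall>t\<in>{0..T}. commute (HS t) Hp"
    and UV_evol: "\<forall>E>0. evolution T
        (\<lambda>t. liftS (HS t) + liftB HB + E *\<^sub>R liftS Hp + V) (UV E)"
    and UW_evol: "\<forall>E>0. evolution T
        (\<lambda>t. liftS (HS t) + liftB HB + E *\<^sub>R liftS Hp
              + (\<Sum>a\<in>\<I>. liftS (Pr a) ** V ** liftS (Pr a))) (UW E)"
    and N_ui: "unitarily_invariant_norm N"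
  shows "((\<lambda>E. N (UV E T ** liftS (\<Sum>a\<in>\<I>. Pr a) - UW E T ** liftS (\<Sum>a\<in>\<I>. Pr a)))
           \<longlongrightarrow> 0) at_top"
proof -
  define Q where "Q a = (liftS (Pr a) :: ('s \<times> 'b) cmat)" for a
  have cadj_liftS: "cadj (liftS X :: ('s \<times> 'b) cmat) = liftS (cadj X)" for X :: "'s cmat"
    by (simp add: liftS_def cadj_kron cadj_mat)
  have liftS0: "(liftS (0::'s cmat) :: ('s \<times> 'b) cmat) = 0" by (simp add: liftS_def kron_zero_left)
  have Qh: "\<forall>a\<in>\<Lambda>. hermitian (Q a)"
    using Pr_herm by (simp add: Q_def hermitian_def cadj_liftS)
  have Qo: "\<forall>a\<in>\<Lambda>. \<forall>b\<in>\<Lambda>. Q a ** Q b = (if a = b then Q a else 0)"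
    using Pr_orth by (simp add: Q_def liftS_mult liftS0)
  have liftS_sum: "(liftS (\<Sum>a\<in>S. f a) :: ('s \<times> 'b) cmat) = (\<Sum>a\<in>S. liftS (f a))" for S and f :: "real \<Rightarrow> 's cmat"
    by (simp add: liftS_def kron_sum_left)
  have Qc: "(\<Sum>a\<in>\<Lambda>. Q a) = mat 1"
    unfolding Q_def liftS_sum[symmetric] Pr_complete by (simp add: liftS_def kron_one)
  interpret proj Q \<Lambda> by unfold_locales (use \<Lambda>_fin Qh Qo Qc in auto)
  have Aeq: "Aop = liftS Hp"
    unfolding Aop_def Hp_spec liftS_sum by (simp add: Q_def liftS_def kron_mat_left)
  have Peq: "Pop \<I> = liftS (\<Sum>a\<in>\<I>. Pr a)" unfolding Pop_def liftS_sum Q_def ..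
  have Weq: "Wop \<I> V = (\<Sum>a\<in>\<I>. liftS (Pr a) ** V ** liftS (Pr a))" unfolding Wop_def Q_def ..
  define K where "K t = liftS (HS t) + liftB HB" for t
  have bl: "bounded_linear (liftS :: 's cmat \<Rightarrow> ('s \<times> 'b) cmat)"
    using linear_liftS linear_conv_bounded_linear by blast
  have Kc: "continuous_on {0..T} K"
    unfolding K_def by (intro continuous_on_add continuous_on_const bounded_linear.continuous_on[OF bl HS_cont])
  have Kh: "\<forall>t\<in>{0..T}. hermitian (K t)"
    using HS_herm HB_herm
    by (simp add: K_def hermitian_def cadj_add cadj_liftS liftB_def cadj_kron cadj_mat)
  have KP: "\<forall>t\<in>{0..T}. K t ** Pop \<I> = Pop \<I> ** K t"
    using comm_P by (simp add: K_def Peq matrix_add_ldistrib matrix_add_rdistrib' liftS_mult liftS_liftB commute_def)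
  have UVe': "\<forall>E>0. evolution T (\<lambda>t. K t + E *\<^sub>R Aop + V) (UV E)"
    using UV_evol by (simp add: K_def Aeq)
  have UWe': "\<forall>E>0. evolution T (\<lambda>t. K t + E *\<^sub>R Aop + Wop \<I> V) (UW E)"
    using UW_evol by (simp add: K_def Aeq Weq)
  obtain C where C: "\<forall>E\<ge>1. norm (UV E T ** Pop \<I> - UW E T ** Pop \<I>) \<le> C / E"
    using core[OF T_pos Kc Kh V_herm \<I>_sub KP UVe' UWe'] by blast
  show ?thesis
    by (rule final_limit[OF N_ui, of 1 _ C]) (use C in \<open>simp add: Peq\<close>)
qed


end
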